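(* In the algebra $\mathcal A$, for every $i\in[1,n-1]$, $$\alpha_i(x_i)\,\alpha_i(x_{i+1})=\alpha_i(x_{i+1})\,\alpha_i(x_i).$$
   Context: Let $R=\mathbb Z[\mu_1,\mu_2]$. Fix $n\ge2$. Let $\mathcal A$ be the associative algebra over $R[[x_1,\dots,x_n]]$ generated by $u_1,\dots,u_{n-1}$ subject to: the $x_j$ commute with all $u_i$; $u_iu_j=u_ju_i$ for $|i-j|>1$; $u_iu_{i+1}u_i=u_{i+1}u_iu_{i+1}$; $u_i^2=-\mu_1u_i$; and $\mu_2x_ix_{i+1}u_i=0$ for all $i$. For $i\in[1,n-1]$ and $x\in R[[x_1,\dots,x_n]]$, set $\alpha_i(x)=(1+xu_{n-1})(1+xu_{n-2})\cdots(1+xu_i)$. *)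

theory Defs
  imports Main
begin

definition alpha :: "nat \<Rightarrow> (nat \<Rightarrow> 'a::ring_1) \<Rightarrow> nat \<Rightarrow> 'a \<Rightarrow> 'a" where
  "alpha n u i x = prod_list (map (\<lambda>j. 1 + x * u j) (rev [i..<n]))"

end

theory Submission
  imports Defs
begin

lemma Mlem:
  fixes a b m v w :: "'a::ring_1"
  assumes ca: "\<forall>y. a*y=y*a" and cb: "\<forall>y. b*y=y*b" and cm: "\<forall>y. m*y=y*m"
   and vv: "v*v = -(m*v)" and ww: "w*w = -(m*w)" and br: "w*v*w = v*w*v"
  shows "(1+a*v)*(1+a*w)*(1+b*v) = (1 + (a+b)*v + a*b*(w*v) - m*a*b*v - a*b*(v*w)) * (1+a*w)"
proof -
  have s1: "\<And>y. v*(a*y) = a*(v*y)" "\<And>y. v*(b*y) = b*(v*y)" "\<And>y. v*(m*y) = m*(v*y)"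
           "\<And>y. w*(a*y) = a*(w*y)" "\<And>y. w*(b*y) = b*(w*y)" "\<And>y. w*(m*y) = m*(w*y)"
           "\<And>y. b*(a*y) = a*(b*y)" "\<And>y. a*(m*y) = m*(a*y)" "\<And>y. b*(m*y) = m*(b*y)"
    using ca cb cm by (metis mult.assoc)+
  have s2: "v*a = a*v" "v*b=b*v" "v*m=m*v" "w*a=a*w" "w*b=b*w" "w*m=m*w" "b*a=a*b" "a*m=m*a" "b*m=m*b"
    using ca cb cm by metis+
  have s3: "\<And>y. v*(v*y) = -(m*(v*y))" "\<And>y. w*(w*y) = -(m*(w*y))" "\<And>y. w*(v*(w*y)) = v*(w*(v*y))"
    using vv ww br by (metis mult.assoc mult_minus_left)+
  have br': "w*(v*w) = v*(w*v)" using br by (simp add: mult.assoc)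
  show ?thesis
    by (simp add: algebra_simps s1 s2 s3 vv ww br')
qed

lemma alpha_Suc: "i \<le> k \<Longrightarrow> alpha (Suc k) u i x = (1 + x * u k) * alpha k u i x"
  by (simp add: alpha_def)

lemma alpha_self: "alpha i u i x = 1"
  by (simp add: alpha_def)

lemma comm_prod_list: "(\<forall>y\<in>set ys. c*y = y*(c::'a::ring_1)) \<Longrightarrow> c * prod_list ys = prod_list ys * c"
  by (induction ys) (auto simp: mult.assoc[symmetric], metis mult.assoc)

theorem mainTheorem11:
  fixes u x :: "nat \<Rightarrow> 'a::ring_1" and mu1 mu2 :: 'a and n i :: nat
  assumes n2: "n \<ge> 2"
    and mu1_central: "\<forall>a. mu1 * a = a * mu1"
    and mu2_central: "\<forall>a. mu2 * a = a * mu2"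
    and x_central: "\<forall>j\<in>{1..n}. \<forall>a. x j * a = a * x j"
    and far_comm: "\<forall>k\<in>{1..<n}. \<forall>l\<in>{1..<n}. (k + 1 < l \<or> l + 1 < k) \<longrightarrow> u k * u l = u l * u k"
    and braid: "\<forall>k. 1 \<le> k \<and> k + 1 < n \<longrightarrow> u k * u (k + 1) * u k = u (k + 1) * u k * u (k + 1)"
    and quad: "\<forall>k\<in>{1..<n}. u k * u k = - (mu1 * u k)"
    and nil: "\<forall>k\<in>{1..<n}. mu2 * x k * x (k + 1) * u k = 0"
    and i: "i \<in> {1..<n}"
  shows "alpha n u i (x i) * alpha n u i (x (i + 1)) = alpha n u i (x (i + 1)) * alpha n u i (x i)"
  proof -
  have i1: "1 \<le> i" "i < n" using i by auto
  define a where "a = x i"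
  define b where "b = x (i+1)"
  have ca: "\<forall>y. a*y=y*a" using x_central i1 unfolding a_def by auto
  have cb: "\<forall>y. b*y=y*b" using x_central i1 unfolding b_def by auto
  have key: "\<And>k. i \<le> k \<Longrightarrow> k \<le> n \<Longrightarrow> alpha k u i a * alpha k u i b = alpha k u i b * alpha k u i a"
  proof -
    fix k assume "i \<le> k" "k \<le> n"
    then show "alpha k u i a * alpha k u i b = alpha k u i b * alpha k u i a"
    proof (induction k rule: less_induct)
      case (less k)
      show ?case
      proof (cases "k \<le> Suc i")
        case True
        then have "k = i \<or> k = Suc i" using less.prems by auto
        then show ?thesis
        proof
          assume "k = i" then show ?thesis by (simp add: alpha_self)
        next
          assume k: "k = Suc i"
          have "(1 + a * u i) * (1 + b * u i) = (1 + b * u i) * (1 + a * u i)"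
          proof -
            have "b * u i * (a * u i) = a * u i * (b * u i)"
              using ca cb by (metis mult.assoc)
            then show ?thesis by (simp add: algebra_simps)
          qed
          then show ?thesis using k by (simp add: alpha_Suc alpha_self)
        qed
      next
        case False
        then obtain j where kj: "k = Suc (Suc j)" and ij: "i \<le> j" using less.prems
          by (metis Suc_le_D not_less_eq_eq le_SucE Suc_leI not_le)
        have j1: "1 \<le> j" "j + 1 < n" using ij i1 less.prems kj by auto
        have IH: "alpha (Suc j) u i a * alpha (Suc j) u i b = alpha (Suc j) u i b * alpha (Suc j) u i a"
          using less.IH[of "Suc j"] kj ij less.prems by auto
        have commA: "(1 + c * u (Suc j)) * alpha j u i d = alpha j u i d * (1 + c * u (Suc j))"
          if cc: "\<forall>y. c*y=y*c" and cd: "\<forall>y. d*y=y*d" for c d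
        proof -
          show ?thesis unfolding alpha_def
          proof (rule comm_prod_list, clarsimp)
            fix l assume l: "i \<le> l" "l < j"
            have uc: "u (Suc j) * u l = u l * u (Suc j)"
              using far_comm l j1 i1 by auto
            have "c * u (Suc j) * (d * u l) = d * u l * (c * u (Suc j))"
            proof -
              have "c * u (Suc j) * (d * u l) = c * d * (u (Suc j) * u l)"
                using cd by (metis mult.assoc)
              also have "\<dots> = d * c * (u l * u (Suc j))" using cc uc by metis
              also have "\<dots> = d * u l * (c * u (Suc j))" using cc by (metis mult.assoc)
              finally show ?thesis .
            qed
            then show "(1 + c * u (Suc j)) * (1 + d * u l) = (1 + d * u l) * (1 + c * u (Suc j))"
              by (simp add: algebra_simps)
          qed
        qed
        note cm = mu1_central
        have vv: "u (Suc j) * u (Suc j) = -(mu1 * u (Suc j))" using quad j1 by auto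
        have ww: "u j * u j = -(mu1 * u j)" using quad j1 i1 ij by auto
        have br: "u j * u (Suc j) * u j = u (Suc j) * u j * u (Suc j)" using braid j1 by auto
        define M where "M c d = 1 + (c+d)*u (Suc j) + c*d*(u j*u (Suc j)) - mu1*c*d*u (Suc j) - c*d*(u (Suc j)*u j)" for c d
        have Msym: "M a b = M b a"
        proof -
          have "a*b = b*a" using ca by auto
          then show ?thesis unfolding M_def by (simp add: algebra_simps)
        qed
        have step: "alpha k u i c * alpha k u i d = M c d * (alpha (Suc j) u i c * alpha (Suc j) u i d)"
          if cc: "\<forall>y. c*y=y*c" and cd: "\<forall>y. d*y=y*d" for c d
        proof -
          have "alpha k u i c * alpha k u i d
              = (1 + c * u (Suc j)) * (1 + c * u j) * (alpha j u i c * (1 + d * u (Suc j))) * alpha (Suc j) u i d"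
            using kj ij by (simp add: alpha_Suc mult.assoc)
          also have "\<dots> = ((1 + c * u (Suc j)) * (1 + c * u j) * (1 + d * u (Suc j))) * (alpha j u i c * alpha (Suc j) u i d)"
            using commA[OF cd cc] by (metis mult.assoc)
          also have "\<dots> = M c d * (1 + c * u j) * (alpha j u i c * alpha (Suc j) u i d)"
            unfolding M_def using Mlem[OF cc cd cm vv ww br] by simp
          also have "\<dots> = M c d * (alpha (Suc j) u i c * alpha (Suc j) u i d)"
            using ij by (simp add: alpha_Suc mult.assoc)
          finally show ?thesis .
        qed
        show ?thesis using step[OF ca cb] step[OF cb ca] Msym IH by simp
      qed
    qed
  qed
  show ?thesis using key[of n] i1 unfolding a_def b_def by auto
qed

end
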